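(* For all integers $m\ge1$, $r\ge0$ and $n\ge0$, $$\mathcal B_n(x)=\sum_{k=0}^n\sum_{l=k}^n\binom nl\,\mathcal B_{n-l}\,w_{m,r}(l,k)\,\mathcal D_{m,r}(k,x).$$
   Context: The Bernoulli polynomials are defined by $\sum_{n\ge0}\mathcal B_n(x)\frac{t^n}{n!}=\frac{te^{xt}}{e^t-1}$ and $\mathcal B_n:=\mathcal B_n(0)$. For integers $m\ge1$, $n,k,r\ge0$: the $r$-Whitney numbers of the first kind $w_{m,r}(n,k)$ are defined by $\sum_{n\ge k}w_{m,r}(n,k)\frac{z^n}{n!}=(1+mz)^{-r/m}\frac{\ln^k(1+mz)}{m^kk!}$; the $r$-Whitney numbers of the second kind $W_{m,r}(n,k)$ by $\sum_{n\ge k}W_{m,r}(n,k)\frac{z^n}{n!}=\frac{e^{rz}}{k!}\left(\frac{e^{mz}-1}{m}\right)^k$; and the $r$-Dowling polynomial is $\mathcal D_{m,r}(n,u):=\sum_{k=0}^nW_{m,r}(n,k)u^k$. *)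

theory Defs
  imports "HOL-Computational_Algebra.Formal_Power_Series"
begin

definition bernoulli_poly :: "nat \<Rightarrow> real \<Rightarrow> real" where
  "bernoulli_poly n x = fact n * fps_nth (fps_X * fps_exp x / (fps_exp 1 - 1)) n"

definition bernoulli_num :: "nat \<Rightarrow> real" where
  "bernoulli_num n = bernoulli_poly n 0"

text \<open>r-Whitney numbers of the first kind:
  sum_n w(n,k) z^n/n! = (1+mz)^{-r/m} ln^k(1+mz) / (m^k k!).\<close>
definition whitney1 :: "nat \<Rightarrow> nat \<Rightarrow> nat \<Rightarrow> nat \<Rightarrow> real" where
  "whitney1 m r n k = fact n * fps_nth
     ((fps_binomial (- (real r / real m)) oo (fps_const (real m) * fps_X))
       * (fps_ln 1 oo (fps_const (real m) * fps_X)) ^ k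
       / fps_const (real m ^ k * fact k)) n"

definition whitney2 :: "nat \<Rightarrow> nat \<Rightarrow> nat \<Rightarrow> nat \<Rightarrow> real" where
  "whitney2 m r n k = fact n * fps_nth
     (fps_exp (real r) * ((fps_exp (real m) - 1) / fps_const (real m)) ^ k
       / fps_const (fact k)) n"

definition dowling :: "nat \<Rightarrow> nat \<Rightarrow> nat \<Rightarrow> real \<Rightarrow> real" where
  "dowling m r n u = (\<Sum>k=0..n. whitney2 m r n k * u ^ k)"

end

theory Submission
  imports Defs
begin
unbundle fps_syntax

lemma bern_expand:
  fixes x :: real
  shows "bernoulli_poly n x = (\<Sum>l=0..n. real (n choose l) * bernoulli_num (n - l) * x ^ l)"
proof -
  define Q :: "real fps" where "Q = fps_X / (fps_exp 1 - 1)"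
  have sd: "subdegree (fps_exp (1::real) - 1) = 1"
    by (rule subdegreeI) auto
  have eq: "fps_X * fps_exp x / (fps_exp 1 - 1) = Q * fps_exp x"
    unfolding Q_def by (rule fps_divide_times2) (use sd in \<open>simp only: subdegree_fps_X\<close>)
  have bn: "bernoulli_num i = fact i * Q $ i" for i
    unfolding bernoulli_num_def bernoulli_poly_def Q_def by simp
  have "bernoulli_poly n x = fact n * (\<Sum>i=0..n. Q $ i * (x ^ (n - i) / fact (n - i)))"
    unfolding bernoulli_poly_def eq fps_mult_nth by simp
  also have "\<dots> = (\<Sum>i=0..n. real (n choose i) * bernoulli_num i * x ^ (n - i))"
    unfolding sum_distrib_left
  proof (rule sum.cong[OF refl])
    fix i assume i: "i \<in> {0..n}"
    then have "real (n choose i) = fact n / (fact i * fact (n - i))"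
      by (simp add: binomial_fact)
    then show "fact n * (Q $ i * (x ^ (n - i) / fact (n - i))) =
      real (n choose i) * bernoulli_num i * x ^ (n - i)"
      by (simp add: bn field_simps)
  qed
  also have "\<dots> = (\<Sum>l=0..n. real (n choose l) * bernoulli_num (n - l) * x ^ l)"
    by (rule sum.reindex_bij_witness[where i="\<lambda>l. n - l" and j="\<lambda>l. n - l"])
       (auto simp: binomial_symmetric[symmetric])
  finally show ?thesis .
qed

lemma tri_swap:
  fixes f :: "nat \<Rightarrow> nat \<Rightarrow> real"
  shows "(\<Sum>k=0..n. \<Sum>l=k..n. f k l) = (\<Sum>l=0..n. \<Sum>k=0..l. f k l)"
proof (induction n)
  case 0 then show ?case by simp
next
  case (Suc n)
  have "(\<Sum>k=0..Suc n. \<Sum>l=k..Suc n. f k l) = (\<Sum>k=0..n. \<Sum>l=k..Suc n. f k l) + f (Suc n) (Suc n)"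
    by simp
  also have "(\<Sum>k=0..n. \<Sum>l=k..Suc n. f k l) = (\<Sum>k=0..n. (\<Sum>l=k..n. f k l) + f k (Suc n))"
    by (rule sum.cong) auto
  finally show ?case using Suc by (simp add: sum.distrib)
qed

lemma pow_nth_zero: "(h::'a::idom fps) $ 0 = 0 \<Longrightarrow> n < k \<Longrightarrow> (h ^ k) $ n = 0"
  using startsby_zero_power_prefix by blast

lemma compose_nth_ext:
  fixes F h :: "'a::idom fps"
  assumes "h $ 0 = 0" "n \<le> N"
  shows "(F oo h) $ n = (\<Sum>k=0..N. F $ k * (h ^ k) $ n)"
  unfolding fps_compose_nth
  by (rule sum.mono_neutral_left) (use assms in \<open>auto simp: pow_nth_zero\<close>)

lemma compose_mult_nth:
  fixes F h a :: "'a::idom fps"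
  assumes h0: "h $ 0 = 0"
  shows "(\<Sum>k=0..l. F $ k * (a * h ^ k) $ l) = (a * (F oo h)) $ l"
proof -
  have "(\<Sum>k=0..l. F $ k * (a * h ^ k) $ l)
      = (\<Sum>k=0..l. \<Sum>i=0..l. a $ i * (F $ k * (h ^ k) $ (l - i)))"
    by (simp add: fps_mult_nth sum_distrib_left algebra_simps)
  also have "\<dots> = (\<Sum>i=0..l. a $ i * (\<Sum>k=0..l. F $ k * (h ^ k) $ (l - i)))"
    by (subst sum.swap) (simp add: sum_distrib_left)
  also have "\<dots> = (\<Sum>i=0..l. a $ i * (F oo h) $ (l - i))"
    using compose_nth_ext[OF h0, of "l - _" l F] by (intro sum.cong) auto
  also have "\<dots> = (a * (F oo h)) $ l" by (simp add: fps_mult_nth)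
  finally show ?thesis .
qed

lemma exp_ln_binomial:
  "fps_exp (c::real) oo fps_ln 1 = fps_binomial c"
proof -
  let ?P = "fps_exp c oo fps_ln 1"
  have d: "fps_deriv ?P = fps_const c * ?P / (1 + fps_X)"
    by (simp add: fps_compose_deriv fps_ln_deriv fps_divide_unit
        flip: fps_const_mult_apply_left)
  have "?P = fps_const (?P $ 0) * fps_binomial c"
    using d fps_binomial_ODE_unique by blast
  then show ?thesis by simp
qed

lemma exp1_ln: "fps_exp (1::real) oo fps_ln 1 = 1 + fps_X"
  using exp_ln_binomial[of 1] by (simp add: fps_binomial_1)

definition "MM m = fps_const (real m) * fps_X"
definition "hh m = fps_const (inverse (real m)) * (fps_ln 1 oo MM m)"
definition "aa m r = fps_binomial (- (real r / real m)) oo MM m"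
definition "GG m = fps_const (inverse (real m)) * (fps_exp (real m) - 1)"

context
  fixes m r :: nat
  assumes m1: "m \<ge> 1"
begin

lemma MM0[simp]: "MM m $ 0 = 0" by (simp add: MM_def)
lemma hh0[simp]: "hh m $ 0 = 0" by (simp add: hh_def)
lemma GG0[simp]: "GG m $ 0 = 0" by (simp add: GG_def)

lemma exp_hh: "fps_exp c oo hh m = fps_binomial (c / real m) oo MM m"
proof -
  have L0: "(fps_ln 1 oo MM m) $ 0 = (0::real)" by simp
  have "hh m = (fps_const (inverse (real m)) * fps_X) oo (fps_ln 1 oo MM m)"
    unfolding hh_def by (simp add: fps_const_mult_apply_left[symmetric])
  then have "fps_exp c oo hh m = (fps_exp c oo (fps_const (inverse (real m)) * fps_X)) oo (fps_ln 1 oo MM m)"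
    by (simp add: fps_compose_assoc[OF L0])
  also have "\<dots> = fps_exp (c / real m) oo (fps_ln 1 oo MM m)"
    using fps_exp_compose_linear[of c "inverse (real m)"] by (simp add: field_simps)
  also have "\<dots> = (fps_exp (c / real m) oo fps_ln 1) oo MM m"
    by (simp add: fps_compose_assoc)
  finally show ?thesis by (simp add: exp_ln_binomial)
qed

lemma GG_hh: "GG m oo hh m = fps_X"
proof -
  have "GG m oo hh m = fps_const (inverse (real m)) * ((fps_exp (real m) oo hh m) - 1)"
    unfolding GG_def by (simp add: fps_compose_sub_distrib flip: fps_const_mult_apply_left)
  also have "\<dots> = fps_const (inverse (real m)) * MM m"
    using m1 by (simp add: exp_hh fps_binomial_1 fps_compose_add_distrib)
  finally show ?thesis using m1 by (simp add: MM_def)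
qed

lemma aa_exp: "aa m r * (fps_exp (real r) oo hh m) = 1"
proof -
  have "aa m r * (fps_exp (real r) oo hh m) = (fps_binomial (- (real r / real m)) * fps_binomial (real r / real m)) oo MM m"
    unfolding aa_def exp_hh by (simp add: fps_compose_mult_distrib)
  also have "\<dots> = 1" by (simp flip: fps_binomial_add_mult)
  finally show ?thesis .
qed

lemma main_comp:
  "aa m r * ((fps_const (inverse (fact j)) * (fps_exp (real r) * GG m ^ j)) oo hh m)
     = fps_const (inverse (fact j)) * fps_X ^ j"
proof -
  have "(fps_const (inverse (fact j)) * (fps_exp (real r) * GG m ^ j)) oo hh m
     = fps_const (inverse (fact j)) * ((fps_exp (real r) oo hh m) * fps_X ^ j)"
    by (simp add: fps_compose_mult_distrib fps_compose_power[symmetric] GG_hh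
        flip: fps_const_mult_apply_left)
  then show ?thesis using aa_exp
    by (metis (no_types, lifting) mult.assoc mult.left_commute mult_1)
qed

end
context
  fixes m r :: nat
  assumes m1: "m \<ge> 1"
begin

lemma w1_eq: "whitney1 m r l k = fact l / fact k * (aa m r * hh m ^ k) $ l"
proof -
  have "hh m ^ k = fps_const (inverse (real m) ^ k) * (fps_ln 1 oo MM m) ^ k"
    unfolding hh_def by (simp add: power_mult_distrib fps_const_power)
  then show ?thesis
    unfolding whitney1_def aa_def MM_def
    by (simp add: MM_def power_inverse field_simps)
qed

lemma w2_eq: "whitney2 m r k j = fact k * (fps_const (inverse (fact j)) * (fps_exp (real r) * GG m ^ j)) $ k"
  unfolding whitney2_def GG_def by (simp add: power_mult_distrib fps_const_power del: fps_const_power)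

lemma w2_zero: "k < j \<Longrightarrow> whitney2 m r k j = 0"
  unfolding w2_eq using pow_nth_zero[OF GG0[OF m1], of _ j]
  by (simp add: fps_mult_nth)

lemma ortho: "(\<Sum>k=0..l. whitney1 m r l k * whitney2 m r k j) = (if l = j then 1 else 0)"
proof -
  define F where "F = fps_const (inverse (fact j)) * (fps_exp (real r) * GG m ^ j)"
  have "(\<Sum>k=0..l. whitney1 m r l k * whitney2 m r k j)
      = fact l * (\<Sum>k=0..l. F $ k * (aa m r * hh m ^ k) $ l)"
    unfolding w1_eq w2_eq F_def[symmetric] sum_distrib_left
    by (rule sum.cong) auto
  also have "\<dots> = fact l * (aa m r * (F oo hh m)) $ l"
    by (simp add: compose_mult_nth[OF hh0[OF m1]])
  also have "\<dots> = (if l = j then 1 else 0)"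
    unfolding F_def main_comp[OF m1] by simp
  finally show ?thesis .
qed

lemma inner: "(\<Sum>k=0..l. whitney1 m r l k * dowling m r k x) = x ^ l"
proof -
  have "(\<Sum>k=0..l. whitney1 m r l k * dowling m r k x)
     = (\<Sum>k=0..l. \<Sum>j=0..l. whitney1 m r l k * whitney2 m r k j * x ^ j)"
  proof (rule sum.cong[OF refl])
    fix k assume "k \<in> {0..l}"
    then have "dowling m r k x = (\<Sum>j=0..l. whitney2 m r k j * x ^ j)"
      unfolding dowling_def
      by (intro sum.mono_neutral_left) (auto simp: w2_zero)
    then show "whitney1 m r l k * dowling m r k x = (\<Sum>j=0..l. whitney1 m r l k * whitney2 m r k j * x ^ j)"
      by (simp add: sum_distrib_left mult.assoc)
  qed
  also have "\<dots> = (\<Sum>j=0..l. (\<Sum>k=0..l. whitney1 m r l k * whitney2 m r k j) * x ^ j)"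
    by (subst sum.swap) (simp add: sum_distrib_right)
  also have "\<dots> = (\<Sum>j=0..l. (if l = j then x ^ j else 0))"
    by (intro sum.cong) (auto simp: ortho)
  also have "\<dots> = x ^ l" by simp
  finally show ?thesis .
qed

end
theorem mainTheorem14:
  fixes m r n :: nat and x :: real
  assumes "m \<ge> 1"
  shows "bernoulli_poly n x =
    (\<Sum>k=0..n. \<Sum>l=k..n. real (n choose l) * bernoulli_num (n - l)
        * whitney1 m r l k * dowling m r k x)"
proof -
  have "(\<Sum>k=0..n. \<Sum>l=k..n. real (n choose l) * bernoulli_num (n - l)
        * whitney1 m r l k * dowling m r k x)
      = (\<Sum>l=0..n. \<Sum>k=0..l. real (n choose l) * bernoulli_num (n - l)
        * whitney1 m r l k * dowling m r k x)"
    by (rule tri_swap)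
  also have "\<dots> = (\<Sum>l=0..n. real (n choose l) * bernoulli_num (n - l) * x ^ l)"
  proof (rule sum.cong[OF refl])
    fix l
    show "(\<Sum>k=0..l. real (n choose l) * bernoulli_num (n - l) * whitney1 m r l k * dowling m r k x)
        = real (n choose l) * bernoulli_num (n - l) * x ^ l"
      using inner[where r=r and l=l and x=x, OF assms] by (simp add: sum_distrib_left[symmetric] mult.assoc)
  qed
  finally show ?thesis by (simp add: bern_expand)
qed

end
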